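(* Every jewel and every pyramid contains an induced subgraph isomorphic to $C_5$, to the bull, or to an anchor.
   Context: All graphs are finite and simple. The bull is the graph consisting of a triangle with two disjoint pendant edges. An anchor is a six-vertex graph consisting of a 4-vertex induced path $P$, a vertex $c$ adjacent to all vertices of $P$, and a vertex $a$ adjacent to no vertex of $P$ (with $a,c$ either adjacent or not). A path $p_1-\dots-p_k$ is a sequence of distinct vertices with $p_i$ adjacent to $p_j$ iff $|i-j|=1$; its ends are $p_1,p_k$. A pyramid is a graph formed by the union of a triangle $\{b_1,b_2,b_3\}$, a fourth vertex $a$, and three paths $P_1,P_2,P_3$ such that: for $i=1,2,3$, $P_i$ has ends $a$ and $b_i$; for $1\le i<j\le3$, $a$ is the only vertex in both $P_i$ and $P_j$, and $b_ib_j$ is the only edge between $V(P_i)\setminus\{a\}$ and $V(P_j)\setminus\{a\}$; and $a$ is adjacent to at most one of $b_1,b_2,b_3$. A jewel is a graph $H$ with vertex set $\{v_1,\dots,v_5\}\cup F$ such that $H[F]$ is connected, $v_1v_2,v_2v_3,v_3v_4,v_4v_5,v_5v_1$ are edges, $v_1v_3,v_2v_4,v_1v_4$ are non-edges, $v_2,v_3,v_5$ have no neighbours in $F$, and each of $v_1,v_4$ has a neighbour in $F$. *)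

theory Defs
  imports Main
begin

text \<open>A finite simple graph: a finite vertex set V with a symmetric, irreflexive
adjacency relation E (only its restriction to V matters).\<close>
definition simple_graph :: "'a set \<Rightarrow> ('a \<Rightarrow> 'a \<Rightarrow> bool) \<Rightarrow> bool" where
  "simple_graph V E \<longleftrightarrow> finite V \<and> (\<forall>x y. E x y \<longrightarrow> E y x) \<and> (\<forall>x. \<not> E x x)"

definition has_induced :: "'a set \<Rightarrow> ('a \<Rightarrow> 'a \<Rightarrow> bool) \<Rightarrow> 'b set \<Rightarrow> ('b \<Rightarrow> 'b \<Rightarrow> bool) \<Rightarrow> bool" where
  "has_induced V E W F \<longleftrightarrow>
     (\<exists>f. inj_on f W \<and> f ` W \<subseteq> V \<and> (\<forall>x\<in>W. \<forall>y\<in>W. E (f x) (f y) \<longleftrightarrow> F x y))"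

definition edges_of :: "(nat \<times> nat) list \<Rightarrow> nat \<Rightarrow> nat \<Rightarrow> bool" where
  "edges_of L x y \<longleftrightarrow> (x, y) \<in> set L \<or> (y, x) \<in> set L"

definition C5_edges :: "nat \<Rightarrow> nat \<Rightarrow> bool" where
  "C5_edges = edges_of [(0,1),(1,2),(2,3),(3,4),(4,0)]"

definition bull_edges :: "nat \<Rightarrow> nat \<Rightarrow> bool" where
  "bull_edges = edges_of [(0,1),(1,2),(2,0),(3,0),(4,1)]"

text \<open>Anchor: induced path 0-1-2-3, vertex 4 (= c) complete to the path,
vertex 5 (= a) anticomplete to the path; a c adjacent iff ac.\<close>
definition anchor_edges :: "bool \<Rightarrow> nat \<Rightarrow> nat \<Rightarrow> bool" where
  "anchor_edges ac = edges_of ([(0,1),(1,2),(2,3),(4,0),(4,1),(4,2),(4,3)] @ (if ac then [(4,5)] else []))"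

definition is_path :: "'a set \<Rightarrow> ('a \<Rightarrow> 'a \<Rightarrow> bool) \<Rightarrow> 'a list \<Rightarrow> bool" where
  "is_path V E P \<longleftrightarrow> P \<noteq> [] \<and> distinct P \<and> set P \<subseteq> V \<and>
     (\<forall>i<length P. \<forall>j<length P. E (P ! i) (P ! j) \<longleftrightarrow> (i = j + 1 \<or> j = i + 1))"

definition connected_on :: "('a \<Rightarrow> 'a \<Rightarrow> bool) \<Rightarrow> 'a set \<Rightarrow> bool" where
  "connected_on E F \<longleftrightarrow> F \<noteq> {} \<and>
     (\<forall>x\<in>F. \<forall>y\<in>F. (\<lambda>u v. u \<in> F \<and> v \<in> F \<and> E u v)\<^sup>*\<^sup>* x y)"

definition pyramid :: "'a set \<Rightarrow> ('a \<Rightarrow> 'a \<Rightarrow> bool) \<Rightarrow> bool" where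
  "pyramid V E \<longleftrightarrow> (\<exists>a b1 b2 b3 P1 P2 P3.
     distinct [b1, b2, b3] \<and> E b1 b2 \<and> E b2 b3 \<and> E b1 b3 \<and>
     is_path V E P1 \<and> is_path V E P2 \<and> is_path V E P3 \<and>
     hd P1 = a \<and> last P1 = b1 \<and> hd P2 = a \<and> last P2 = b2 \<and> hd P3 = a \<and> last P3 = b3 \<and>
     V = set P1 \<union> set P2 \<union> set P3 \<and>
     set P1 \<inter> set P2 = {a} \<and> set P1 \<inter> set P3 = {a} \<and> set P2 \<inter> set P3 = {a} \<and>
     (\<forall>x\<in>set P1 - {a}. \<forall>y\<in>set P2 - {a}. E x y \<longleftrightarrow> x = b1 \<and> y = b2) \<and>
     (\<forall>x\<in>set P1 - {a}. \<forall>y\<in>set P3 - {a}. E x y \<longleftrightarrow> x = b1 \<and> y = b3) \<and>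
     (\<forall>x\<in>set P2 - {a}. \<forall>y\<in>set P3 - {a}. E x y \<longleftrightarrow> x = b2 \<and> y = b3) \<and>
     card {b \<in> {b1, b2, b3}. E a b} \<le> 1)"

definition jewel :: "'a set \<Rightarrow> ('a \<Rightarrow> 'a \<Rightarrow> bool) \<Rightarrow> bool" where
  "jewel V E \<longleftrightarrow> (\<exists>v1 v2 v3 v4 v5 F.
     distinct [v1, v2, v3, v4, v5] \<and> F \<inter> {v1, v2, v3, v4, v5} = {} \<and>
     V = {v1, v2, v3, v4, v5} \<union> F \<and> connected_on E F \<and>
     E v1 v2 \<and> E v2 v3 \<and> E v3 v4 \<and> E v4 v5 \<and> E v5 v1 \<and>
     \<not> E v1 v3 \<and> \<not> E v2 v4 \<and> \<not> E v1 v4 \<and>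
     (\<forall>f\<in>F. \<not> E v2 f \<and> \<not> E v3 f \<and> \<not> E v5 f) \<and>
     (\<exists>f\<in>F. E v1 f) \<and> (\<exists>f\<in>F. E v4 f))"

end

theory Submission
  imports Defs
begin

lemma ind_list:
  assumes "distinct xs" "set xs \<subseteq> V" "n = length xs"
    "\<forall>i<n. \<forall>j<n. E (xs!i) (xs!j) \<longleftrightarrow> F i j"
  shows "has_induced V E {0..<n} F"
  unfolding has_induced_def
proof (rule exI[of _ "\<lambda>i. xs ! i"], intro conjI)
  show "inj_on ((!) xs) {0..<n}" using assms by (auto intro!: inj_on_nth)
  show "(!) xs ` {0..<n} \<subseteq> V" using assms by auto
  show "\<forall>x\<in>{0..<n}. \<forall>y\<in>{0..<n}. E (xs ! x) (xs ! y) = F x y" using assms by auto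
qed

lemma c5I:
  assumes sym: "\<And>x y. E x y \<Longrightarrow> E y x" and irr: "\<And>x. \<not> E x x"
    and "{ya,yb,yc,yd,ye} \<subseteq> V" "distinct [ya,yb,yc,yd,ye]"
    "E ya yb" "E yb yc" "E yc yd" "E yd ye" "E ye ya"
    "\<not>E ya yc" "\<not>E ya yd" "\<not>E yb yd" "\<not>E yb ye" "\<not>E yc ye"
  shows "has_induced V E {0..<5} C5_edges"
proof (rule ind_list[where xs="[ya,yb,yc,yd,ye]"])
  have s: "E yb ya" "E yc yb" "E yd yc" "E ye yd" "E ya ye"
    "\<not>E yc ya" "\<not>E yd ya" "\<not>E yd yb" "\<not>E ye yb" "\<not>E ye yc"
    using assms sym by blast+
  show "\<forall>i<5. \<forall>j<5. E ([ya,yb,yc,yd,ye]!i) ([ya,yb,yc,yd,ye]!j) \<longleftrightarrow> C5_edges i j"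
    unfolding C5_edges_def edges_of_def
    using assms s irr by (simp add: less_Suc_eq numeral_eq_Suc)
qed (use assms in auto)

lemma bullI:
  assumes sym: "\<And>x y. E x y \<Longrightarrow> E y x" and irr: "\<And>x. \<not> E x x"
    and "{ya,yb,yc,yd,ye} \<subseteq> V" "distinct [ya,yb,yc,yd,ye]"
    "E ya yb" "E yb yc" "E yc ya" "E yd ya" "E ye yb"
    "\<not>E yd yb" "\<not>E yd yc" "\<not>E ye ya" "\<not>E ye yc" "\<not>E yd ye"
  shows "has_induced V E {0..<5} bull_edges"
proof (rule ind_list[where xs="[ya,yb,yc,yd,ye]"])
  have s: "E yb ya" "E yc yb" "E ya yc" "E ya yd" "E yb ye"
    "\<not>E yb yd" "\<not>E yc yd" "\<not>E ya ye" "\<not>E yc ye" "\<not>E ye yd"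
    using assms sym by blast+
  show "\<forall>i<5. \<forall>j<5. E ([ya,yb,yc,yd,ye]!i) ([ya,yb,yc,yd,ye]!j) \<longleftrightarrow> bull_edges i j"
    unfolding bull_edges_def edges_of_def
    using assms s irr by (simp add: less_Suc_eq numeral_eq_Suc)
qed (use assms in auto)

lemma anchorI:
  assumes sym: "\<And>x y. E x y \<Longrightarrow> E y x" and irr: "\<And>x. \<not> E x x"
    and "{ya,yb,yc,yd,ye,yf} \<subseteq> V" "distinct [ya,yb,yc,yd,ye,yf]"
    "E ya yb" "E yb yc" "E yc yd" "E ye ya" "E ye yb" "E ye yc" "E ye yd"
    "\<not>E ya yc" "\<not>E ya yd" "\<not>E yb yd"
    "\<not>E yf ya" "\<not>E yf yb" "\<not>E yf yc" "\<not>E yf yd" "\<not>E yf ye"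
  shows "has_induced V E {0..<6} (anchor_edges False)"
proof (rule ind_list[where xs="[ya,yb,yc,yd,ye,yf]"])
  have s: "E yb ya" "E yc yb" "E yd yc" "E ya ye" "E yb ye" "E yc ye" "E yd ye"
    "\<not>E yc ya" "\<not>E yd ya" "\<not>E yd yb"
    "\<not>E ya yf" "\<not>E yb yf" "\<not>E yc yf" "\<not>E yd yf" "\<not>E ye yf"
    using assms sym by blast+
  show "\<forall>i<6. \<forall>j<6. E ([ya,yb,yc,yd,ye,yf]!i) ([ya,yb,yc,yd,ye,yf]!j) \<longleftrightarrow> anchor_edges False i j"
    unfolding anchor_edges_def edges_of_def
    using assms s irr by (simp add: less_Suc_eq numeral_eq_Suc)
qed (use assms in auto)


lemma path_end:
  assumes "is_path V E P" "hd P = a" "last P = b" "a \<noteq> b"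
  shows "E a b \<or> (\<exists>c\<in>set P. c \<noteq> a \<and> c \<noteq> b \<and> E c b)"
proof -
  have ne: "P \<noteq> []" and d: "distinct P" and pe: "\<forall>i<length P. \<forall>j<length P. E (P ! i) (P ! j) \<longleftrightarrow> (i = j + 1 \<or> j = i + 1)"
    using assms(1) unfolding is_path_def by auto
  define n where "n = length P"
  have h: "P ! 0 = a" using assms(2) ne by (simp add: hd_conv_nth)
  have l: "P ! (n - 1) = b" using assms(3) ne by (simp add: last_conv_nth n_def)
  have "n \<noteq> 1" using h l assms(4) by auto
  moreover have "n \<noteq> 0" using ne n_def by auto
  ultimately consider "n = 2" | "n \<ge> 3" by linarith
  then show ?thesis
  proof cases
    case 1
    have "E (P ! 0) (P ! 1)" using pe 1 n_def by auto
    then show ?thesis using h l 1 by auto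
  next
    case 2
    let ?c = "P ! (n - 2)"
    have "?c \<in> set P" using 2 n_def by auto
    moreover have "E ?c (P ! (n - 1))"
    proof -
      have "n - 2 < length P" "n - 1 < length P" "n - 1 = (n - 2) + 1" using 2 n_def by auto
      thus ?thesis using pe by blast
    qed
    hence "E ?c b" using l by simp
    moreover have "?c \<noteq> a"
    proof -
      have "n - 2 < length P" "0 < length P" "n - 2 \<noteq> 0" using 2 n_def by auto
      thus ?thesis using nth_eq_iff_index_eq[OF d] h by metis
    qed
    moreover have "?c \<noteq> b"
    proof -
      have "n - 2 < length P" "n - 1 < length P" "n - 2 \<noteq> n - 1" using 2 n_def by auto
      thus ?thesis using nth_eq_iff_index_eq[OF d] l by metis
    qed
    ultimately show ?thesis by blast
  qed
qed

lemma walk_cross: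
  assumes "R\<^sup>*\<^sup>* x y" "P x" "\<not> P y"
  shows "\<exists>u w. R u w \<and> P u \<and> \<not> P w"
  using assms by (induction rule: rtranclp_induct) auto


lemma jewel_case:
  assumes sg: "simple_graph V E" and j: "jewel V E"
  shows "has_induced V E {0..<5} C5_edges \<or> has_induced V E {0..<5} bull_edges \<or>
         (\<exists>ac. has_induced V E {0..<6} (anchor_edges ac))"
proof -
  have sym: "\<And>x y. E x y \<Longrightarrow> E y x" and irr: "\<And>x. \<not> E x x"
    using sg unfolding simple_graph_def by auto
  obtain v1 v2 v3 v4 v5 F where d: "distinct [v1, v2, v3, v4, v5]" and dF: "F \<inter> {v1, v2, v3, v4, v5} = {}"
    and VV: "V = {v1, v2, v3, v4, v5} \<union> F" and con: "connected_on E F"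
    and e: "E v1 v2" "E v2 v3" "E v3 v4" "E v4 v5" "E v5 v1"
    and ne: "\<not> E v1 v3" "\<not> E v2 v4" "\<not> E v1 v4"
    and nF: "\<forall>f\<in>F. \<not> E v2 f \<and> \<not> E v3 f \<and> \<not> E v5 f"
    and f1: "\<exists>f\<in>F. E v1 f" and f4: "\<exists>f\<in>F. E v4 f"
    using j unfolding jewel_def by blast
  have nF': "\<And>f. f \<in> F \<Longrightarrow> \<not> E f v2 \<and> \<not> E f v3 \<and> \<not> E f v5 \<and> f \<noteq> v1 \<and> f \<noteq> v2 \<and> f \<noteq> v3 \<and> f \<noteq> v4 \<and> f \<noteq> v5"
    using nF dF sym by blast
  consider "\<not> E v5 v2" "\<not> E v5 v3" | "E v5 v2" "\<not> E v5 v3" | "\<not> E v5 v2" "E v5 v3" | "E v5 v2" "E v5 v3"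
    by blast
  then show ?thesis
  proof cases
    case 1
    have "has_induced V E {0..<5} C5_edges"
      by (rule c5I[OF sym irr, where ya=v1 and yb=v2 and yc=v3 and yd=v4 and ye=v5]) (use VV d e ne 1 sym in auto)
    thus ?thesis by blast
  next
    case 2
    obtain f where f: "f \<in> F" "E v1 f" using f1 by blast
    have "has_induced V E {0..<5} bull_edges"
      by (rule bullI[OF sym irr, where ya=v1 and yb=v2 and yc=v5 and yd=f and ye=v3]) (use VV d e ne 2 sym f nF'[OF f(1)] in auto)
    thus ?thesis by blast
  next
    case 3
    obtain f where f: "f \<in> F" "E v4 f" using f4 by blast
    have "has_induced V E {0..<5} bull_edges"
      by (rule bullI[OF sym irr, where ya=v4 and yb=v3 and yc=v5 and yd=f and ye=v2]) (use VV d e ne 3 sym f nF'[OF f(1)] in auto)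
    thus ?thesis by blast
  next
    case 4
    show ?thesis
    proof (cases "\<exists>f\<in>F. E v1 f \<and> E v4 f")
      case True
      then obtain f where f: "f \<in> F" "E v1 f" "E v4 f" by blast
      have "has_induced V E {0..<5} C5_edges"
        by (rule c5I[OF sym irr, where ya=v1 and yb=f and yc=v4 and yd=v3 and ye=v2]) (use VV d e ne 4 sym f nF'[OF f(1)] in auto)
      thus ?thesis by blast
    next
      case nb: False
      show ?thesis
      proof (cases "\<exists>f\<in>F. \<exists>g\<in>F. E v1 f \<and> E f g \<and> E g v4")
        case True
        then obtain f g where f: "f \<in> F" "g \<in> F" "E v1 f" "E f g" "E g v4" by blast
        have "f \<noteq> g" using f irr by auto
        moreover have "\<not> E v4 f" "\<not> E v1 g" using nb f sym by blast+
        ultimately have "has_induced V E {0..<5} C5_edges"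
          by (intro c5I[OF sym irr, where ya=v1 and yb=f and yc=g and yd=v4 and ye=v5]) (use VV d e ne 4 sym f nF'[OF f(1)] nF'[OF f(2)] in auto)
        thus ?thesis by blast
      next
        case nb2: False
        obtain f g where fg: "f \<in> F" "E v1 f" "g \<in> F" "E v4 g" using f1 f4 by blast
        let ?R = "\<lambda>u v. u \<in> F \<and> v \<in> F \<and> E u v"
        have "?R\<^sup>*\<^sup>* f g" using con fg unfolding connected_on_def by blast
        moreover have "\<not> E v1 g" using nb fg sym by blast
        ultimately obtain u w where uw: "?R u w" "E v1 u" "\<not> E v1 w"
          using walk_cross[of ?R f g "E v1"] fg by blast
        have "\<not> E v4 w" using nb2 uw sym by blast
        have "has_induced V E {0..<6} (anchor_edges False)"
          by (rule anchorI[OF sym irr, where ya=v1 and yb=v2 and yc=v3 and yd=v4 and ye=v5 and yf=w])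
            (use VV d e ne 4 sym uw \<open>\<not> E v4 w\<close> nF'[of w] in auto)
        thus ?thesis by blast
      qed
    qed
  qed
qed


lemma pyramid_case:
  assumes sg: "simple_graph V E" and p: "pyramid V E"
  shows "has_induced V E {0..<5} bull_edges"
proof -
  have sym: "\<And>x y. E x y \<Longrightarrow> E y x" and irr: "\<And>x. \<not> E x x" and fin: "finite V"
    using sg unfolding simple_graph_def by auto
  obtain a b1 b2 b3 P1 P2 P3 where d: "distinct [b1, b2, b3]" and t: "E b1 b2" "E b2 b3" "E b1 b3"
    and ip: "is_path V E P1" "is_path V E P2" "is_path V E P3"
    and he: "hd P1 = a" "last P1 = b1" "hd P2 = a" "last P2 = b2" "hd P3 = a" "last P3 = b3"
    and VV: "V = set P1 \<union> set P2 \<union> set P3"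
    and i12: "set P1 \<inter> set P2 = {a}" and i13: "set P1 \<inter> set P3 = {a}" and i23: "set P2 \<inter> set P3 = {a}"
    and x12: "\<forall>x\<in>set P1 - {a}. \<forall>y\<in>set P2 - {a}. E x y \<longleftrightarrow> x = b1 \<and> y = b2"
    and x13: "\<forall>x\<in>set P1 - {a}. \<forall>y\<in>set P3 - {a}. E x y \<longleftrightarrow> x = b1 \<and> y = b3"
    and x23: "\<forall>x\<in>set P2 - {a}. \<forall>y\<in>set P3 - {a}. E x y \<longleftrightarrow> x = b2 \<and> y = b3"
    and cd: "card {b \<in> {b1, b2, b3}. E a b} \<le> 1"
    using p unfolding pyramid_def by (elim exE conjE) (rule that, assumption+)
  have two: False if "x \<in> {b1,b2,b3}" "y \<in> {b1,b2,b3}" "x \<noteq> y" "E a x" "E a y" for x y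
  proof -
    have "{x,y} \<subseteq> {b \<in> {b1, b2, b3}. E a b}" using that by auto
    hence "card {x,y} \<le> card {b \<in> {b1, b2, b3}. E a b}" by (intro card_mono) auto
    thus False using cd that by auto
  qed
  have t': "E b2 b1" "E b3 b2" "E b3 b1" using t sym by blast+
  have ab: "a \<noteq> b1" "a \<noteq> b2" "a \<noteq> b3"
    using two[of b2 b3] two[of b1 b3] two[of b1 b2] d t t' by auto
  have mem: "b1 \<in> set P1" "b2 \<in> set P2" "b3 \<in> set P3"
    using ip he unfolding is_path_def by (auto intro: last_in_set)
  have sub: "set P1 \<subseteq> V" "set P2 \<subseteq> V" "set P3 \<subseteq> V" using VV by auto
  have c1: "E a b1 \<or> (\<exists>c\<in>set P1. c \<noteq> a \<and> c \<noteq> b1 \<and> E c b1)" using path_end[OF ip(1) he(1,2) ab(1)] .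
  have c2: "E a b2 \<or> (\<exists>c\<in>set P2. c \<noteq> a \<and> c \<noteq> b2 \<and> E c b2)" using path_end[OF ip(2) he(3,4) ab(2)] .
  have c3: "E a b3 \<or> (\<exists>c\<in>set P3. c \<noteq> a \<and> c \<noteq> b3 \<and> E c b3)" using path_end[OF ip(3) he(5,6) ab(3)] .
  consider "\<exists>c\<in>set P1. c \<noteq> a \<and> c \<noteq> b1 \<and> E c b1" "\<exists>c\<in>set P2. c \<noteq> a \<and> c \<noteq> b2 \<and> E c b2"
    | "\<exists>c\<in>set P1. c \<noteq> a \<and> c \<noteq> b1 \<and> E c b1" "\<exists>c\<in>set P3. c \<noteq> a \<and> c \<noteq> b3 \<and> E c b3"
    | "\<exists>c\<in>set P2. c \<noteq> a \<and> c \<noteq> b2 \<and> E c b2" "\<exists>c\<in>set P3. c \<noteq> a \<and> c \<noteq> b3 \<and> E c b3"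
    using c1 c2 c3 two[of b1 b2] two[of b1 b3] two[of b2 b3] d by auto
  then show ?thesis
  proof cases
    case 1
    then obtain c d where c: "c \<in> set P1" "c \<noteq> a" "c \<noteq> b1" "E c b1" and dd: "d \<in> set P2" "d \<noteq> a" "d \<noteq> b2" "E d b2" by blast
    have b2P: "b2 \<in> set P2 - {a}" and b1P: "b1 \<in> set P1 - {a}" and b3P: "b3 \<in> set P3 - {a}" using mem ab by auto
    have n1: "\<not> E c b2" using x12 c b2P by auto
    have n2: "\<not> E c b3" using x13 c b3P by auto
    have n3: "\<not> E d b1" using x12 dd b1P sym by blast
    have n4: "\<not> E d b3" using x23 dd b3P by auto
    have n5: "\<not> E c d" using x12 c dd by auto
    have ds: "c \<noteq> b2" "c \<noteq> b3" "d \<noteq> b1" "d \<noteq> b3" "c \<noteq> d"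
      using i12 i13 i23 c dd b1P b2P b3P by blast+
    show ?thesis
      by (rule bullI[OF sym irr, where ya=b1 and yb=b2 and yc=b3 and yd=c and ye=d])
        (use sub c dd mem d t t' ds n1 n2 n3 n4 n5 in auto)
  next
    case 2
    then obtain c d where c: "c \<in> set P1" "c \<noteq> a" "c \<noteq> b1" "E c b1" and dd: "d \<in> set P3" "d \<noteq> a" "d \<noteq> b3" "E d b3" by blast
    have b2P: "b2 \<in> set P2 - {a}" and b1P: "b1 \<in> set P1 - {a}" and b3P: "b3 \<in> set P3 - {a}" using mem ab by auto
    have n1: "\<not> E c b3" using x13 c b3P by auto
    have n2: "\<not> E c b2" using x12 c b2P by auto
    have n3: "\<not> E d b1" using x13 dd b1P sym by blast
    have n4: "\<not> E d b2" using x23 dd b2P sym by blast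
    have n5: "\<not> E c d" using x13 c dd by auto
    have ds: "c \<noteq> b2" "c \<noteq> b3" "d \<noteq> b1" "d \<noteq> b2" "c \<noteq> d"
      using i12 i13 i23 c dd b1P b2P b3P by blast+
    show ?thesis
      by (rule bullI[OF sym irr, where ya=b1 and yb=b3 and yc=b2 and yd=c and ye=d])
        (use sub c dd mem d t t' ds n1 n2 n3 n4 n5 in auto)
  next
    case 3
    then obtain c d where c: "c \<in> set P2" "c \<noteq> a" "c \<noteq> b2" "E c b2" and dd: "d \<in> set P3" "d \<noteq> a" "d \<noteq> b3" "E d b3" by blast
    have b2P: "b2 \<in> set P2 - {a}" and b1P: "b1 \<in> set P1 - {a}" and b3P: "b3 \<in> set P3 - {a}" using mem ab by auto
    have n1: "\<not> E c b3" using x23 c b3P by auto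
    have n2: "\<not> E c b1" using x12 c b1P sym by blast
    have n3: "\<not> E d b2" using x23 dd b2P sym by blast
    have n4: "\<not> E d b1" using x13 dd b1P sym by blast
    have n5: "\<not> E c d" using x23 c dd by auto
    have ds: "c \<noteq> b1" "c \<noteq> b3" "d \<noteq> b1" "d \<noteq> b2" "c \<noteq> d"
      using i12 i13 i23 c dd b1P b2P b3P by blast+
    show ?thesis
      by (rule bullI[OF sym irr, where ya=b2 and yb=b3 and yc=b1 and yd=c and ye=d])
        (use sub c dd mem d t t' ds n1 n2 n3 n4 n5 in auto)
  qed
qed

theorem theorem1p6:
  fixes V :: "'a set" and E :: "'a \<Rightarrow> 'a \<Rightarrow> bool"
  assumes "simple_graph V E"
    and "jewel V E \<or> pyramid V E"
  shows "has_induced V E {0..<5} C5_edges \<or> has_induced V E {0..<5} bull_edges \<or>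
         (\<exists>ac. has_induced V E {0..<6} (anchor_edges ac))"
  using assms(2) jewel_case[OF assms(1)] pyramid_case[OF assms(1)] by blast

end
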